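(* Let $n\ge 2k\ge 2$. The Kneser graph $K(n,k)$ admits perfect state transfer if and only if $n=2k$.
   Context: The Kneser graph $K(n,k)$ has as vertices the $k$-subsets of $\{1,\ldots,n\}$, two being adjacent iff they are disjoint. For a simple graph $X$ with adjacency matrix $A$, let $\mathcal{H}_X(t)=e^{itA}$. $X$ admits perfect state transfer (PST) from a vertex $u$ to a vertex $v\neq u$ at time $\tau>0$ if $|\mathcal{H}_X(\tau)_{u,v}|=1$; $X$ admits PST if this happens for some $u\ne v$ and some $\tau>0$. *)

theory Defs
  imports "HOL-Analysis.Analysis"
begin

text \<open>A finite simple graph is given by a finite vertex set V and a symmetric,
irreflexive adjacency relation adj. Its adjacency matrix is indexed by V.\<close>

definition adj_matrix :: "('a \<Rightarrow> 'a \<Rightarrow> bool) \<Rightarrow> 'a \<Rightarrow> 'a \<Rightarrow> complex" where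
  "adj_matrix adj u v = (if adj u v then 1 else 0)"

fun adj_pow :: "'a set \<Rightarrow> ('a \<Rightarrow> 'a \<Rightarrow> bool) \<Rightarrow> nat \<Rightarrow> 'a \<Rightarrow> 'a \<Rightarrow> complex" where
  "adj_pow V adj 0 u v = (if u = v then 1 else 0)"
| "adj_pow V adj (Suc m) u v = (\<Sum>w\<in>V. adj_pow V adj m u w * adj_matrix adj w v)"

text \<open>The transition matrix H(t) = exp(i t A) = sum_m (i t)^m / m! * A^m, entrywise.\<close>
definition transition_matrix :: "'a set \<Rightarrow> ('a \<Rightarrow> 'a \<Rightarrow> bool) \<Rightarrow> real \<Rightarrow> 'a \<Rightarrow> 'a \<Rightarrow> complex" where
  "transition_matrix V adj t u v =
     (\<Sum>m. (\<i> * complex_of_real t) ^ m / of_nat (fact m) * adj_pow V adj m u v)"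

definition pst :: "'a set \<Rightarrow> ('a \<Rightarrow> 'a \<Rightarrow> bool) \<Rightarrow> 'a \<Rightarrow> 'a \<Rightarrow> real \<Rightarrow> bool" where
  "pst V adj u v \<tau> \<longleftrightarrow> u \<in> V \<and> v \<in> V \<and> u \<noteq> v \<and> \<tau> > 0 \<and>
      cmod (transition_matrix V adj \<tau> u v) = 1"

definition admits_pst :: "'a set \<Rightarrow> ('a \<Rightarrow> 'a \<Rightarrow> bool) \<Rightarrow> bool" where
  "admits_pst V adj \<longleftrightarrow> (\<exists>u v \<tau>. pst V adj u v \<tau>)"

definition kneser_vertices :: "nat \<Rightarrow> nat \<Rightarrow> nat set set" where
  "kneser_vertices n k = {S. S \<subseteq> {1..n} \<and> card S = k}"

definition kneser_adj :: "nat set \<Rightarrow> nat set \<Rightarrow> bool" where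
  "kneser_adj S T \<longleftrightarrow> S \<inter> T = {}"

end

theory Submission
  imports Defs
begin

lemma adj_pow_add:
  assumes "finite V" "v \<in> V"
  shows "adj_pow V adj (m + l) u v = (\<Sum>w\<in>V. adj_pow V adj m u w * adj_pow V adj l w v)"
  using assms(2)
proof (induction l arbitrary: v)
  case 0
  have "(\<Sum>w\<in>V. adj_pow V adj m u w * adj_pow V adj 0 w v) = (\<Sum>w\<in>V. if w = v then adj_pow V adj m u w else 0)"
    by (rule sum.cong) auto
  also have "\<dots> = adj_pow V adj m u v" using 0 assms(1) by simp
  finally show ?case by simp
next
  case (Suc l)
  have "adj_pow V adj (m + Suc l) u v = (\<Sum>x\<in>V. adj_pow V adj (m+l) u x * adj_matrix adj x v)" by simp
  also have "\<dots> = (\<Sum>x\<in>V. (\<Sum>w\<in>V. adj_pow V adj m u w * adj_pow V adj l w x) * adj_matrix adj x v)"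
    using Suc.IH by (intro sum.cong) auto
  also have "\<dots> = (\<Sum>x\<in>V. \<Sum>w\<in>V. adj_pow V adj m u w * (adj_pow V adj l w x * adj_matrix adj x v))"
    by (simp add: sum_distrib_right mult.assoc)
  also have "\<dots> = (\<Sum>w\<in>V. \<Sum>x\<in>V. adj_pow V adj m u w * (adj_pow V adj l w x * adj_matrix adj x v))"
    by (rule sum.swap)
  also have "\<dots> = (\<Sum>w\<in>V. adj_pow V adj m u w * adj_pow V adj (Suc l) w v)"
    by (simp add: sum_distrib_left)
  finally show ?case .
qed

lemma adj_pow_cnj: "cnj (adj_pow V adj m u v) = adj_pow V adj m u v"
  by (induction m arbitrary: v) (auto simp: adj_matrix_def cnj_sum intro: sum.cong)

lemma adj_pow_sym:
  assumes "finite V" "u \<in> V" "v \<in> V" "\<And>x y. adj x y = adj y x"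
  shows "adj_pow V adj m u v = adj_pow V adj m v u"
  using assms(2,3)
proof (induction m arbitrary: u v)
  case 0 then show ?case by simp
next
  case (Suc m)
  have one: "adj_pow V adj 1 v w = adj_matrix adj v w" for w
  proof -
    have "adj_pow V adj 1 v w = (\<Sum>x\<in>V. if x = v then adj_matrix adj x w else 0)"
      by (simp, intro sum.cong) auto
    then show ?thesis using Suc.prems assms(1) by simp
  qed
  have "adj_pow V adj (Suc m) v u = adj_pow V adj (1 + m) v u" by simp
  also have "\<dots> = (\<Sum>w\<in>V. adj_pow V adj 1 v w * adj_pow V adj m w u)"
    by (rule adj_pow_add[OF assms(1) Suc.prems(1)])
  also have "\<dots> = (\<Sum>w\<in>V. adj_matrix adj v w * adj_pow V adj m w u)"
    by (simp only: one)
  also have "\<dots> = (\<Sum>w\<in>V. adj_pow V adj m u w * adj_matrix adj w v)"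
    using Suc.IH Suc.prems assms(4) by (intro sum.cong) (auto simp: adj_matrix_def)
  finally show ?case by simp
qed

lemma adj_pow_bound: "cmod (adj_pow V adj m u v) \<le> real (card V) ^ m"
proof (induction m arbitrary: v)
  case 0 then show ?case by simp
next
  case (Suc m)
  have "cmod (adj_pow V adj (Suc m) u v) \<le> (\<Sum>w\<in>V. cmod (adj_pow V adj m u w * adj_matrix adj w v))"
    by (simp add: norm_sum)
  also have "\<dots> \<le> (\<Sum>w\<in>V. real (card V) ^ m)"
  proof (intro sum_mono)
    fix w
    have "cmod (adj_matrix adj w v) \<le> 1" by (simp add: adj_matrix_def)
    then show "cmod (adj_pow V adj m u w * adj_matrix adj w v) \<le> real (card V) ^ m"
      using Suc.IH[of w] by (simp add: norm_mult) (metis mult_right_le_one_le norm_ge_zero order_trans)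
  qed
  also have "\<dots> = real (card V) ^ Suc m" by simp
  finally show ?case .
qed

definition tterm :: "'a set \<Rightarrow> ('a \<Rightarrow> 'a \<Rightarrow> bool) \<Rightarrow> real \<Rightarrow> 'a \<Rightarrow> 'a \<Rightarrow> nat \<Rightarrow> complex" where
  "tterm V adj t u v m = (\<i> * complex_of_real t) ^ m / of_nat (fact m) * adj_pow V adj m u v"

lemma tterm_summable: "summable (\<lambda>m. norm (tterm V adj t u v m))"
proof (rule summable_comparison_test')
  show "summable (\<lambda>m. inverse (fact m) * (\<bar>t\<bar> * real (card V)) ^ m)" by (rule summable_exp)
  fix m :: nat
  have "norm (norm (tterm V adj t u v m)) = \<bar>t\<bar>^m / fact m * cmod (adj_pow V adj m u v)"
    by (simp add: tterm_def norm_mult norm_divide norm_power)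
  also have "\<dots> \<le> \<bar>t\<bar>^m / fact m * real (card V) ^ m"
    by (intro mult_left_mono adj_pow_bound) auto
  also have "\<dots> = inverse (fact m) * (\<bar>t\<bar> * real (card V)) ^ m"
    by (simp add: power_mult_distrib field_simps)
  finally show "norm (norm (tterm V adj t u v m)) \<le> inverse (fact m) * (\<bar>t\<bar> * real (card V)) ^ m" .
qed

lemma tm_sums: "tterm V adj t u v sums transition_matrix V adj t u v"
proof -
  have "summable (tterm V adj t u v)" by (rule summable_norm_cancel[OF tterm_summable])
  then show ?thesis unfolding transition_matrix_def tterm_def[abs_def] by (simp add: summable_sums)
qed

lemma binom_helper:
  assumes "i \<le> k"
  shows "(x::complex)^i / of_nat (fact i) * (y^(k-i) / of_nat (fact (k-i))) = of_nat (k choose i) * x^i * y^(k-i) / of_nat (fact k)"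
proof -
  have "fact i * fact (k-i) * (k choose i) = (fact k :: nat)" by (rule binomial_fact_lemma[OF assms])
  then have e: "of_nat (fact i) * of_nat (fact (k-i)) * of_nat (k choose i) = (of_nat (fact k) :: complex)"
    by (metis of_nat_mult)
  have n1: "(of_nat (fact i) :: complex) \<noteq> 0" and n2: "(of_nat (fact (k-i)) :: complex) \<noteq> 0"
    by (simp_all del: of_nat_fact)
  have n3: "(of_nat (k choose i) :: complex) \<noteq> 0" using assms by simp
  have gen: "X / A * (Y / B) = C * X * Y / (A * B * C)" if "A \<noteq> 0" "B \<noteq> 0" "C \<noteq> 0" for A B C X Y :: complex
    using that by (simp add: field_simps)
  show ?thesis
    by (subst e[symmetric]) (rule gen[OF n1 n2 n3])
qed

lemma binom_sum:
  "(\<Sum>i\<le>k. (x::complex)^i / of_nat (fact i) * (y^(k-i) / of_nat (fact (k-i))) * a) = (x + y)^k / of_nat (fact k) * a"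
proof -
  have "(\<Sum>i\<le>k. x^i / of_nat (fact i) * (y^(k-i) / of_nat (fact (k-i))) * a)
      = (\<Sum>i\<le>k. of_nat (k choose i) * x^i * y^(k-i) / of_nat (fact k) * a)"
  proof (rule sum.cong[OF refl])
    fix i assume "i \<in> {..k}"
    then have "i \<le> k" by simp
    show "x^i / of_nat (fact i) * (y^(k-i) / of_nat (fact (k-i))) * a = of_nat (k choose i) * x^i * y^(k-i) / of_nat (fact k) * a"
      by (simp only: binom_helper[OF \<open>i \<le> k\<close>])
  qed
  also have "\<dots> = (\<Sum>i\<le>k. of_nat (k choose i) * x^i * y^(k-i)) / of_nat (fact k) * a"
    by (simp del: of_nat_fact add: sum_distrib_right sum_divide_distrib)
  also have "\<dots> = (x + y)^k / of_nat (fact k) * a"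
    by (simp only: binomial_ring)
  finally show ?thesis .
qed
lemma gen2: "(X / F * P) * (Y / G * Q) = X / F * (Y / G) * (P * Q)" for X F P Y G Q :: complex
  by (simp add: divide_inverse mult_ac)

lemma tm_mult:
  assumes "finite V" "u \<in> V" "v \<in> V"
  shows "(\<Sum>w\<in>V. transition_matrix V adj t u w * transition_matrix V adj s w v) = transition_matrix V adj (t + s) u v"
proof -
  have "(\<lambda>k. \<Sum>w\<in>V. \<Sum>i\<le>k. tterm V adj t u w i * tterm V adj s w v (k - i)) sums
        (\<Sum>w\<in>V. transition_matrix V adj t u w * transition_matrix V adj s w v)"
  proof (rule sums_sum)
    fix w
    have "(\<lambda>k. \<Sum>i\<le>k. tterm V adj t u w i * tterm V adj s w v (k - i)) sums
          (suminf (tterm V adj t u w) * suminf (tterm V adj s w v))"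
      by (rule Cauchy_product_sums[OF tterm_summable tterm_summable])
    then show "(\<lambda>k. \<Sum>i\<le>k. tterm V adj t u w i * tterm V adj s w v (k - i)) sums
          (transition_matrix V adj t u w * transition_matrix V adj s w v)"
      by (simp only: sums_unique[OF tm_sums, symmetric])
  qed
  moreover have "(\<Sum>w\<in>V. \<Sum>i\<le>k. tterm V adj t u w i * tterm V adj s w v (k - i)) = tterm V adj (t+s) u v k" for k
  proof -
    let ?x = "\<i> * complex_of_real t" and ?y = "\<i> * complex_of_real s"
    have "(\<Sum>w\<in>V. \<Sum>i\<le>k. tterm V adj t u w i * tterm V adj s w v (k - i))
        = (\<Sum>i\<le>k. \<Sum>w\<in>V. tterm V adj t u w i * tterm V adj s w v (k - i))"
      by (rule sum.swap)
    also have "\<dots> = (\<Sum>i\<le>k. \<Sum>w\<in>V. ?x ^ i / of_nat (fact i) * (?y ^ (k-i) / of_nat (fact (k-i)))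
             * (adj_pow V adj i u w * adj_pow V adj (k-i) w v))"
      unfolding tterm_def by (simp only: gen2)
    also have "\<dots> = (\<Sum>i\<le>k. ?x ^ i / of_nat (fact i) * (?y ^ (k-i) / of_nat (fact (k-i)))
             * adj_pow V adj k u v)"
    proof (rule sum.cong[OF refl])
      fix i assume "i \<in> {..k}"
      then have "i + (k - i) = k" by simp
      then have "adj_pow V adj k u v = (\<Sum>w\<in>V. adj_pow V adj i u w * adj_pow V adj (k-i) w v)"
        using adj_pow_add[OF assms(1) assms(3), of adj i "k-i" u] by metis
      then show "(\<Sum>w\<in>V. ?x ^ i / of_nat (fact i) * (?y ^ (k-i) / of_nat (fact (k-i)))
             * (adj_pow V adj i u w * adj_pow V adj (k-i) w v)) = ?x ^ i / of_nat (fact i) * (?y ^ (k-i) / of_nat (fact (k-i)))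
             * adj_pow V adj k u v"
        by (simp only: sum_distrib_left)
    qed
    also have "\<dots> = (?x + ?y) ^ k / of_nat (fact k) * adj_pow V adj k u v"
      by (rule binom_sum)
    also have "?x + ?y = \<i> * complex_of_real (t + s)" by (simp add: distrib_left)
    finally show ?thesis unfolding tterm_def .
  qed
  ultimately have "(tterm V adj (t+s) u v) sums (\<Sum>w\<in>V. transition_matrix V adj t u w * transition_matrix V adj s w v)"
    by simp
  then show ?thesis by (rule sums_unique2[OF _ tm_sums])
qed

lemma tm_zero: "transition_matrix V adj 0 u v = (if u = v then 1 else 0)"
proof -
  have "transition_matrix V adj 0 u v = (\<Sum>m\<in>{0}. (\<i> * complex_of_real 0) ^ m / of_nat (fact m) * adj_pow V adj m u v)"
    unfolding transition_matrix_def by (rule suminf_finite) auto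
  then show ?thesis by simp
qed

lemma tm_cnj: "cnj (transition_matrix V adj t u v) = transition_matrix V adj (-t) u v"
proof -
  have "(\<lambda>m. cnj (tterm V adj t u v m)) sums cnj (transition_matrix V adj t u v)"
    by (subst sums_cnj) (rule tm_sums)
  moreover have "cnj (tterm V adj t u v m) = tterm V adj (-t) u v m" for m
    by (simp add: tterm_def adj_pow_cnj)
  ultimately have "tterm V adj (-t) u v sums cnj (transition_matrix V adj t u v)" by simp
  then show ?thesis by (rule sums_unique2[OF _ tm_sums])
qed

lemma tm_sym:
  assumes "finite V" "u \<in> V" "v \<in> V" "\<And>x y. adj x y = adj y x"
  shows "transition_matrix V adj t u v = transition_matrix V adj t v u"
  unfolding transition_matrix_def using adj_pow_sym[OF assms] by simp

lemma row_norm: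
  assumes "finite V" "u \<in> V" "\<And>x y. adj x y = adj y x"
  shows "(\<Sum>w\<in>V. (cmod (transition_matrix V adj t u w))^2) = 1"
proof -
  have "(\<Sum>w\<in>V. transition_matrix V adj t u w * transition_matrix V adj (-t) w u) = transition_matrix V adj (t + -t) u u"
    by (rule tm_mult[OF assms(1,2,2)])
  also have "\<dots> = 1" using tm_zero[of V adj u u] by simp
  finally have "(\<Sum>w\<in>V. transition_matrix V adj t u w * transition_matrix V adj (-t) w u) = 1" .
  moreover have eq: "transition_matrix V adj (-t) w u = cnj (transition_matrix V adj t u w)" if "w \<in> V" for w
    using tm_cnj[of V adj t w u] tm_sym[OF assms(1) that assms(2) assms(3), where t=t] by simp
  ultimately have "(\<Sum>w\<in>V. transition_matrix V adj t u w * cnj (transition_matrix V adj t u w)) = 1"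
    by (simp add: eq cong: sum.cong)
  moreover have "complex_of_real (\<Sum>w\<in>V. (cmod (transition_matrix V adj t u w))^2)
     = (\<Sum>w\<in>V. transition_matrix V adj t u w * cnj (transition_matrix V adj t u w))"
    unfolding of_real_sum complex_norm_square ..
  ultimately have "complex_of_real (\<Sum>w\<in>V. (cmod (transition_matrix V adj t u w))^2) = 1"
    by simp
  then show ?thesis by (simp only: of_real_eq_1_iff)
qed

lemma adj_pow_aut:
  assumes "inj_on \<phi> V" "\<phi> ` V = V" "\<And>x y. x \<in> V \<Longrightarrow> y \<in> V \<Longrightarrow> adj (\<phi> x) (\<phi> y) = adj x y"
    "u \<in> V" "v \<in> V"
  shows "adj_pow V adj m (\<phi> u) (\<phi> v) = adj_pow V adj m u v"
  using assms(4,5)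
proof (induction m arbitrary: v)
  case 0
  then show ?case using assms(1) by (auto dest: inj_onD)
next
  case (Suc m)
  have "adj_pow V adj (Suc m) (\<phi> u) (\<phi> v) = (\<Sum>w\<in>\<phi> ` V. adj_pow V adj m (\<phi> u) w * adj_matrix adj w (\<phi> v))"
    using assms(2) by simp
  also have "\<dots> = (\<Sum>w\<in>V. adj_pow V adj m (\<phi> u) (\<phi> w) * adj_matrix adj (\<phi> w) (\<phi> v))"
    using sum.reindex[OF assms(1)] by simp
  also have "\<dots> = (\<Sum>w\<in>V. adj_pow V adj m u w * adj_matrix adj w v)"
    using Suc assms(3) by (intro sum.cong) (auto simp: adj_matrix_def)
  finally show ?case by simp
qed

lemma tm_aut:
  assumes "inj_on \<phi> V" "\<phi> ` V = V" "\<And>x y. x \<in> V \<Longrightarrow> y \<in> V \<Longrightarrow> adj (\<phi> x) (\<phi> y) = adj x y"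
    "u \<in> V" "v \<in> V"
  shows "transition_matrix V adj t (\<phi> u) (\<phi> v) = transition_matrix V adj t u v"
proof -
  have "adj_pow V adj m (\<phi> u) (\<phi> v) = adj_pow V adj m u v" for m
    using assms(3) by (intro adj_pow_aut[where \<phi>=\<phi> and V=V and adj=adj] assms(1,2,4,5)) auto
  then show ?thesis unfolding transition_matrix_def by simp
qed


lemma kneser_finite: "finite (kneser_vertices n k)"
proof -
  have "kneser_vertices n k \<subseteq> Pow {1..n}" by (auto simp: kneser_vertices_def)
  then show ?thesis by (rule finite_subset) simp
qed

lemma kneser_sym: "kneser_adj x y = kneser_adj y x"
  by (auto simp: kneser_adj_def)

lemma no_pst:
  assumes "n > 2 * k" "k \<ge> 1"
  shows "\<not> admits_pst (kneser_vertices n k) kneser_adj"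
proof
  let ?V = "kneser_vertices n k"
  assume "admits_pst ?V kneser_adj"
  then obtain u v \<tau> where P: "pst ?V kneser_adj u v \<tau>" by (auto simp: admits_pst_def)
  then have uV: "u \<in> ?V" and vV: "v \<in> ?V" and uv: "u \<noteq> v"
    and one: "cmod (transition_matrix ?V kneser_adj \<tau> u v) = 1" by (auto simp: pst_def)
  have us: "u \<subseteq> {1..n}" "card u = k" and vs: "v \<subseteq> {1..n}" "card v = k"
    using uV vV by (auto simp: kneser_vertices_def)
  have fu: "finite u" "finite v" using us vs finite_subset by auto
  obtain a b where ab: "a \<in> {1..n}" "b \<in> {1..n}" "a \<in> u \<longleftrightarrow> b \<in> u" "a \<in> v" "b \<notin> v"
  proof (cases "u \<subseteq> v")
    case True
    then have "u = v" using card_subset_eq fu us vs by metis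
    then show ?thesis using uv by simp
  next
    case False
    then obtain b where b: "b \<in> u" "b \<notin> v" by auto
    show ?thesis
    proof (cases "u \<inter> v = {}")
      case False
      then obtain a where a: "a \<in> u" "a \<in> v" by auto
      have "a \<in> {1..n}" "b \<in> {1..n}" using a b us(1) by blast+
      then show ?thesis using a b by (intro that[of a b]) auto
    next
      case True
      have "v \<noteq> {}" using vs assms(2) by auto
      then obtain a where a: "a \<in> v" by auto
      have "card (u \<union> v) = 2 * k" using card_Un_disjoint[OF fu True] us vs by simp
      moreover have "u \<union> v \<subseteq> {1..n}" using us vs by auto
      ultimately have "card ({1..n} - (u \<union> v)) = n - 2 * k"
        by (simp add: card_Diff_subset fu)
      then have "card ({1..n} - (u \<union> v)) > 0" using assms(1) by simp
      then have "{1..n} - (u \<union> v) \<noteq> {}" by (metis card.empty less_irrefl)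
      then obtain c where c: "c \<in> {1..n}" "c \<notin> u" "c \<notin> v" by blast
      have "a \<in> {1..n}" using a vs(1) by blast
      moreover have "a \<notin> u" using a True by blast
      ultimately show ?thesis using a c by (intro that[of a c]) auto
    qed
  qed
  define \<sigma> where "\<sigma> x = (if x = a then b else if x = b then a else x)" for x :: nat
  define \<phi> where "\<phi> S = \<sigma> ` S" for S
  have ss: "\<sigma> (\<sigma> x) = x" for x by (auto simp: \<sigma>_def)
  have injs: "inj \<sigma>" by (metis ss injI)
  have pp: "\<phi> (\<phi> S) = S" for S by (simp add: \<phi>_def image_image ss)
  have injp: "inj_on \<phi> ?V" by (metis pp inj_onI)
  have sub: "\<phi> S \<in> ?V" if "S \<in> ?V" for S
  proof -
    have "\<sigma> ` {1..n} \<subseteq> {1..n}" using ab by (auto simp: \<sigma>_def)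
    then show ?thesis using that injs
      by (auto simp: kneser_vertices_def \<phi>_def card_image inj_on_subset)
  qed
  have im: "\<phi> ` ?V = ?V"
  proof
    show "\<phi> ` ?V \<subseteq> ?V" using sub by auto
    show "?V \<subseteq> \<phi> ` ?V" using sub pp by (metis image_eqI subsetI)
  qed
  have adjp: "kneser_adj (\<phi> x) (\<phi> y) = kneser_adj x y" for x y
    by (simp add: kneser_adj_def \<phi>_def image_Int[OF injs, symmetric])
  have pu: "\<phi> u = u"
  proof (cases "a \<in> u")
    case True
    then have "\<sigma> x \<in> u" if "x \<in> u" for x using that ab by (auto simp: \<sigma>_def)
    then show ?thesis unfolding \<phi>_def by (metis ss image_eqI subsetI subset_antisym image_subsetI)
  next
    case False
    then have "\<sigma> x = x" if "x \<in> u" for x using that ab by (auto simp: \<sigma>_def)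
    then show ?thesis unfolding \<phi>_def by simp
  qed
  have pv: "\<phi> v \<noteq> v"
  proof -
    have "b \<in> \<phi> v" using ab by (auto simp: \<phi>_def \<sigma>_def intro!: image_eqI[of b _ a])
    then show ?thesis using ab by auto
  qed
  have "transition_matrix ?V kneser_adj \<tau> u (\<phi> v) = transition_matrix ?V kneser_adj \<tau> u v"
    using tm_aut[OF injp im, of kneser_adj u v \<tau>] adjp uV vV pu by simp
  then have one2: "cmod (transition_matrix ?V kneser_adj \<tau> u (\<phi> v)) = 1" using one by simp
  have "(\<Sum>w\<in>{v, \<phi> v}. (cmod (transition_matrix ?V kneser_adj \<tau> u w))^2)
        \<le> (\<Sum>w\<in>?V. (cmod (transition_matrix ?V kneser_adj \<tau> u w))^2)"
    using vV sub[OF vV] by (intro sum_mono2 kneser_finite) auto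
  also have "\<dots> = 1" using row_norm[OF kneser_finite uV kneser_sym] .
  finally show False using one one2 pv by simp
qed


lemma yes_pst:
  assumes "k \<ge> 1"
  shows "admits_pst (kneser_vertices (2*k) k) kneser_adj"
proof -
  let ?V = "kneser_vertices (2*k) k"
  define C where "C S = {1..2*k} - S" for S :: "nat set"
  define u where "u = {1..k}"
  have CV: "C S \<in> ?V" if "S \<in> ?V" for S
  proof -
    have s: "S \<subseteq> {1..2*k}" "card S = k" using that by (auto simp: kneser_vertices_def)
    then have "finite S" using finite_subset by blast
    then have "card (C S) = 2*k - k" using s card_Diff_subset[OF \<open>finite S\<close> s(1)] by (simp add: C_def)
    then show ?thesis by (auto simp: kneser_vertices_def C_def)
  qed
  have CC: "C (C S) = S" if "S \<in> ?V" for S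
    using that by (auto simp: kneser_vertices_def C_def)
  have adjC: "kneser_adj w v \<longleftrightarrow> w = C v" if "w \<in> ?V" "v \<in> ?V" for w v
  proof
    assume "kneser_adj w v"
    then have "w \<subseteq> C v" using that by (auto simp: kneser_adj_def kneser_vertices_def C_def)
    moreover have "card w = card (C v)" using that CV[OF that(2)] by (simp add: kneser_vertices_def)
    ultimately show "w = C v" using card_subset_eq[of "C v" w] by (simp add: C_def)
  next
    assume "w = C v" then show "kneser_adj w v" by (auto simp: kneser_adj_def C_def)
  qed
  have uV: "u \<in> ?V" by (simp add: kneser_vertices_def u_def)
  have claim: "\<forall>v\<in>?V. adj_pow ?V kneser_adj m u v =
      (if even m then (if u = v then 1 else 0) else (if u = C v then 1 else 0))" for m
  proof (induction m)
    case 0 then show ?case by simp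
  next
    case (Suc m)
    show ?case
    proof
      fix v assume vV: "v \<in> ?V"
      have "adj_pow ?V kneser_adj (Suc m) u v = (\<Sum>w\<in>?V. if w = C v then adj_pow ?V kneser_adj m u w else 0)"
        using adjC vV by (simp, intro sum.cong) (auto simp: adj_matrix_def)
      also have "\<dots> = adj_pow ?V kneser_adj m u (C v)" using CV[OF vV] kneser_finite by simp
      also have "\<dots> = (if even m then (if u = C v then 1 else 0) else (if u = C (C v) then 1 else 0))"
        using Suc.IH CV[OF vV] by blast
      finally show "adj_pow ?V kneser_adj (Suc m) u v =
        (if even (Suc m) then (if u = v then 1 else 0) else (if u = C v then 1 else 0))"
        using CC[OF vV] by simp
    qed
  qed
  define v where "v = C u"
  have vV: "v \<in> ?V" using CV[OF uV] v_def by simp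
  have uv: "u \<noteq> v" using assms by (auto simp: v_def C_def u_def)
  have uCv: "u = C v" using CC[OF uV] v_def by simp
  have am: "adj_pow ?V kneser_adj m u v = (if even m then 0 else 1)" for m
    using claim[of m] vV uv uCv by auto
  have termeq: "tterm ?V kneser_adj t u v m = \<i> * complex_of_real (sin_coeff m *\<^sub>R t ^ m)" for t m
  proof (cases "even m")
    case True then show ?thesis by (simp add: tterm_def am sin_coeff_def)
  next
    case False
    then obtain j where m: "m = 2 * j + 1" by (metis oddE)
    have t1: "tterm ?V kneser_adj t u v m = (\<i> * complex_of_real t) ^ m / of_nat (fact m)"
      using False by (simp only: tterm_def am if_False mult_1_right)
    have sc: "sin_coeff m = (-1) ^ j / fact m" using False by (simp add: sin_coeff_def m)
    have ip: "(\<i> * complex_of_real t) ^ m = \<i> * (-1) ^ j * complex_of_real t ^ m"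
    proof -
      have "\<i> ^ m = \<i> * (-1) ^ j" by (simp add: m power_mult power_add)
      then show ?thesis by (simp add: power_mult_distrib)
    qed
    show ?thesis unfolding t1 sc ip by simp
  qed
  have "(\<lambda>m. \<i> * complex_of_real (sin_coeff m *\<^sub>R (pi/2) ^ m)) sums (\<i> * complex_of_real (sin (pi/2)))"
    by (intro sums_mult sums_of_real sin_converges)
  moreover have "tterm ?V kneser_adj (pi/2) u v = (\<lambda>m. \<i> * complex_of_real (sin_coeff m *\<^sub>R (pi/2) ^ m))"
    by (rule ext) (rule termeq)
  ultimately have "tterm ?V kneser_adj (pi/2) u v sums (\<i> * complex_of_real (sin (pi/2)))" by (simp only:)
  then have "tterm ?V kneser_adj (pi/2) u v sums \<i>" by simp
  then have "transition_matrix ?V kneser_adj (pi/2) u v = \<i>" by (rule sums_unique2[OF tm_sums])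
  then have "pst ?V kneser_adj u v (pi/2)" using uV vV uv by (simp add: pst_def)
  then show ?thesis unfolding admits_pst_def by blast
qed

theorem mainTheorem3:
  fixes n k :: nat
  assumes "n \<ge> 2 * k" and "2 * k \<ge> 2"
  shows "admits_pst (kneser_vertices n k) kneser_adj \<longleftrightarrow> n = 2 * k"
proof
  assume "admits_pst (kneser_vertices n k) kneser_adj"
  then show "n = 2 * k" using no_pst[of k n] assms by fastforce
next
  assume "n = 2 * k"
  then show "admits_pst (kneser_vertices n k) kneser_adj" using yes_pst[of k] assms by simp
qed

end
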